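(* Let $0\le n\le r$ and let $\mathscr I=[I_0,\dots,I_n]$ be a proper ideal of $\Omega_{H_n}$. Then $\mathscr I$ is prime if and only if for each $0\le k\le n$ the following condition $\mathcal P(k)$ holds: for every $0\le i\le k$, every $a\in L_k(I_{k-1})$ and every $b\in L_i(I_{i-1})\setminus I_i$, $$a\cdot\mathrm{jnd}^k_i(b)\in I_k\ \Longrightarrow\ a\in I_k,$$ where $L_j(I_{j-1})=(\mathrm{res}^j_{j-1})^{-1}(I_{j-1})$ for $j\ge1$ and $L_0(I_{-1}):=R_0$. (In particular $\mathcal P(0)$ says that $I_0$ is a prime ideal of the ring $R_0\cong\mathbb{Z}$.)
   Context: Fix a prime $p$ and an integer $r\ge0$. For $0\le k\le r$ let $R_k$ be the commutative ring which is free as a $\mathbb{Z}$-module with basis $X_{k,0},\dots,X_{k,k}$ and multiplication $X_{k,i}X_{k,j}=p^{k-\max(i,j)}X_{k,\min(i,j)}$; thus $X_{k,k}=1$, and an integer $n$ is identified with $nX_{k,k}$. For $0\le k\le\ell\le r$ define: the additive map $\mathrm{ind}^\ell_k:R_k\to R_\ell$, $X_{k,i}\mapsto X_{\ell,i}$; the ring homomorphism $\mathrm{res}^\ell_k:R_\ell\to R_k$, $\mathrm{res}^\ell_k(X_{\ell,i})=p^{\ell-k}X_{k,i}$ if $i\le k$ and $=p^{\ell-i}$ if $i\ge k$; and the multiplicative map $\mathrm{jnd}^\ell_k:R_k\to R_\ell$, $$\mathrm{jnd}^\ell_k\Big(\sum_{i=0}^k m_iX_{k,i}\Big)=m_kX_{\ell,\ell}+\sum_{k\le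 i<\ell}\frac{m_k^{p^{\ell-i}}-m_k^{p^{\ell-i-1}}}{p^{\ell-i}}X_{\ell,i}+\sum_{0\le i<k}\frac{(\sum_{s=i}^k m_sp^{k-s})^{p^{\ell-k}}-(\sum_{s=i+1}^k m_sp^{k-s})^{p^{\ell-k}}}{p^{\ell-i}}X_{\ell,i}$$ ($m_i\in\mathbb{Z}$). For $k=\ell$ these maps are the identity. These data form the Burnside Tambara functor on $\mathbb{Z}/p^r\mathbb{Z}$; keeping indices $\le n$ gives $\Omega_{H_n}$. An ideal of $\Omega_{H_n}$ is a sequence $[I_0,\dots,I_n]$ of ideals $I_k\subseteq R_k$ such that for every $1\le k\le n$: $\mathrm{ind}^k_{k-1}(I_{k-1})\subseteq I_k$, $\mathrm{res}^k_{k-1}(I_k)\subseteq I_{k-1}$, $\mathrm{jnd}^k_{k-1}(I_{k-1})\subseteq I_k$. It is proper if $I_0\ne R_0$. A proper ideal is prime if for all $0\le\ell\le k\le n$, $a\in R_k$, $b\in R_\ell$: whenever $(\mathrm{jnd}^m_i\mathrm{res}^k_i(a))\cdot(\mathrm{jnd}^m_j\mathrm{res}^\ell_j(b))\in I_m$ for all $0\le i\le k$, $0\le j\le\ell$, $m=\max(i,j)$, then $a\in I_k$ or $b\in I_\ell$. *)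

theory Defs
  imports Main "HOL-Computational_Algebra.Primes"
begin

text \<open>An element of R_k = Z X_{k,0} + ... + Z X_{k,k} is represented by its coefficient
  function m :: nat => int (m i = coefficient of X_{k,i}), vanishing above k.\<close>

type_synonym elt = "nat \<Rightarrow> int"

definition carrierR :: "nat \<Rightarrow> elt set" where
  "carrierR k = {m. \<forall>i>k. m i = 0}"

definition zeroR :: elt where "zeroR = (\<lambda>_. 0)"

definition addR :: "elt \<Rightarrow> elt \<Rightarrow> elt" where
  "addR x y = (\<lambda>i. x i + y i)"

definition negR :: "elt \<Rightarrow> elt" where
  "negR x = (\<lambda>i. - x i)"

text \<open>X_{k,i} X_{k,j} = p^(k - max i j) X_{k, min i j}\<close>
definition multR :: "nat \<Rightarrow> nat \<Rightarrow> elt \<Rightarrow> elt \<Rightarrow> elt" where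
  "multR p k x y = (\<lambda>j. if j \<le> k then
      (\<Sum>i\<le>k. \<Sum>l\<le>k. if min i l = j then x i * y l * int p ^ (k - max i l) else 0)
    else 0)"

definition is_idealR :: "nat \<Rightarrow> nat \<Rightarrow> elt set \<Rightarrow> bool" where
  "is_idealR p k I \<longleftrightarrow> I \<subseteq> carrierR k \<and> zeroR \<in> I
     \<and> (\<forall>x\<in>I. \<forall>y\<in>I. addR x y \<in> I) \<and> (\<forall>x\<in>I. negR x \<in> I)
     \<and> (\<forall>x\<in>I. \<forall>y\<in>carrierR k. multR p k y x \<in> I)"

text \<open>ind^l_k : X_{k,i} |-> X_{l,i}\<close>
definition indR :: "nat \<Rightarrow> nat \<Rightarrow> elt \<Rightarrow> elt" where
  "indR k l m = m"

text \<open>res^l_k (X_{l,i}) = p^(l-k) X_{k,i} if i <= k, = p^(l-i) X_{k,k} if i >= k\<close>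
definition resR :: "nat \<Rightarrow> nat \<Rightarrow> nat \<Rightarrow> elt \<Rightarrow> elt" where
  "resR p l k m = (\<lambda>j. if j < k then int p ^ (l - k) * m j
     else if j = k then (\<Sum>i\<in>{k..l}. m i * int p ^ (l - i))
     else 0)"

text \<open>jnd^l_k, the multiplicative (norm) map, with the given integer formula
  (the quotients are exact; we use integer division).\<close>
definition jndR :: "nat \<Rightarrow> nat \<Rightarrow> nat \<Rightarrow> elt \<Rightarrow> elt" where
  "jndR p k l m = (\<lambda>i.
     if i = l then m k
     else if k \<le> i \<and> i < l then
       (m k ^ (p ^ (l - i)) - m k ^ (p ^ (l - i - 1))) div int p ^ (l - i)
     else if i < k then
       ((\<Sum>s\<in>{i..k}. m s * int p ^ (k - s)) ^ (p ^ (l - k))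
        - (\<Sum>s\<in>{i+1..k}. m s * int p ^ (k - s)) ^ (p ^ (l - k))) div int p ^ (l - i)
     else 0)"

definition is_tambara_ideal :: "nat \<Rightarrow> nat \<Rightarrow> (nat \<Rightarrow> elt set) \<Rightarrow> bool" where
  "is_tambara_ideal p n I \<longleftrightarrow>
     (\<forall>k\<le>n. is_idealR p k (I k)) \<and>
     (\<forall>k. 1 \<le> k \<and> k \<le> n \<longrightarrow>
        indR (k - 1) k ` I (k - 1) \<subseteq> I k \<and>
        resR p k (k - 1) ` I k \<subseteq> I (k - 1) \<and>
        jndR p (k - 1) k ` I (k - 1) \<subseteq> I k)"

definition proper_tambara_ideal :: "nat \<Rightarrow> nat \<Rightarrow> (nat \<Rightarrow> elt set) \<Rightarrow> bool" where
  "proper_tambara_ideal p n I \<longleftrightarrow> is_tambara_ideal p n I \<and> I 0 \<noteq> carrierR 0"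

definition prime_tambara_ideal :: "nat \<Rightarrow> nat \<Rightarrow> (nat \<Rightarrow> elt set) \<Rightarrow> bool" where
  "prime_tambara_ideal p n I \<longleftrightarrow> proper_tambara_ideal p n I \<and>
     (\<forall>k l a b. l \<le> k \<and> k \<le> n \<and> a \<in> carrierR k \<and> b \<in> carrierR l \<longrightarrow>
        (\<forall>i\<le>k. \<forall>j\<le>l.
           multR p (max i j) (jndR p i (max i j) (resR p k i a))
                             (jndR p j (max i j) (resR p l j b)) \<in> I (max i j))
        \<longrightarrow> a \<in> I k \<or> b \<in> I l)"

definition Lset :: "nat \<Rightarrow> (nat \<Rightarrow> elt set) \<Rightarrow> nat \<Rightarrow> elt set" where
  "Lset p I j = (if j = 0 then carrierR 0
                 else {a \<in> carrierR j. resR p j (j - 1) a \<in> I (j - 1)})"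

definition condP :: "nat \<Rightarrow> (nat \<Rightarrow> elt set) \<Rightarrow> nat \<Rightarrow> bool" where
  "condP p I k \<longleftrightarrow> (\<forall>i\<le>k. \<forall>a\<in>Lset p I k. \<forall>b\<in>Lset p I i - I i.
      multR p k a (jndR p i k b) \<in> I k \<longrightarrow> a \<in> I k)"

end

theory Submission
  imports Defs "HOL-Number_Theory.Number_Theory"
begin

lemma fermat_int:
  fixes a :: int assumes p: "prime (p::nat)"
  shows "int p dvd a ^ p - a"
proof -
  define b where "b = nat (a mod int p)"
  have pp: "p > 0" using p prime_gt_0_nat by blast
  have bcong: "[int b = a] (mod int p)"
    using pp by (simp add: b_def cong_def)
  have "[b ^ p = b] (mod p)"
  proof (cases "p dvd b")
    case True
    have "p dvd b ^ p" using True pp by (metis dvd_power dvd_trans)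
    then have "[b ^ p = 0] (mod p)" "[b = 0] (mod p)" using True by (simp_all add: cong_0_iff)
    then show ?thesis by (meson cong_sym cong_trans)
  next
    case False
    then have "[b ^ (p - 1) = 1] (mod p)" using fermat_theorem p by blast
    then have "[b ^ (p - 1) * b = 1 * b] (mod p)" by (rule cong_mult) simp
    moreover have "b ^ (p - 1) * b = b ^ p" using pp
      by (metis Suc_diff_1 power_Suc2)
    ultimately show ?thesis by simp
  qed
  then have "[int b ^ p = int b] (mod int p)"
    by (metis cong_int_iff of_nat_power)
  moreover have "[int b ^ p = a ^ p] (mod int p)" using bcong by (rule cong_pow)
  ultimately have "[a ^ p = a] (mod int p)"
    by (meson bcong cong_sym cong_trans)
  then show ?thesis by (simp add: cong_iff_dvd_diff)
qed

lemma pow_p_lift: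
  fixes a b :: int assumes p: "prime (p::nat)" and e: "e \<ge> 1"
    and d: "int p ^ e dvd a - b"
  shows "int p ^ (e+1) dvd a ^ p - b ^ p"
proof -
  have eq: "a ^ p - b ^ p = (a - b) * (\<Sum>i<p. b ^ (p - Suc i) * a ^ i)"
    by (rule power_diff_sumr2)
  have ab: "[a = b] (mod int p)"
  proof -
    have "int p dvd int p ^ e" using e by (simp add: dvd_power)
    then show ?thesis using d by (simp add: cong_iff_dvd_diff dvd_trans)
  qed
  have "[(\<Sum>i<p. b ^ (p - Suc i) * a ^ i) = (\<Sum>i<p. b ^ (p - Suc i) * b ^ i)] (mod int p)"
    by (intro cong_sum cong_mult cong_refl cong_pow ab)
  moreover have "(\<Sum>i<p. b ^ (p - Suc i) * b ^ i) = (\<Sum>i<p. b ^ (p - 1))"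
  proof (intro sum.cong refl)
    fix i assume "i \<in> {..<p}"
    then have "p - Suc i + i = p - 1" by auto
    then show "b ^ (p - Suc i) * b ^ i = b ^ (p - 1)" by (metis power_add)
  qed
  moreover have "(\<Sum>i<p. b ^ (p - 1)) = int p * b ^ (p - 1)" by simp
  ultimately have "int p dvd (\<Sum>i<p. b ^ (p - Suc i) * a ^ i)"
    by (metis cong_dvd_iff dvd_triv_left)
  then have "int p ^ e * int p dvd (a - b) * (\<Sum>i<p. b ^ (p - Suc i) * a ^ i)"
    using d by (rule mult_dvd_mono[rotated])
  then show ?thesis using eq by (simp add: mult.commute)
qed

lemma pow_pt_lift:
  fixes a b :: int assumes p: "prime (p::nat)" and e: "e \<ge> 1"
    and d: "int p ^ e dvd a - b"
  shows "int p ^ (e+t) dvd a ^ (p ^ t) - b ^ (p ^ t)"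
proof (induction t)
  case 0 then show ?case using d by simp
next
  case (Suc t)
  have "int p ^ (e + t + 1) dvd (a ^ p ^ t) ^ p - (b ^ p ^ t) ^ p"
    using pow_p_lift[OF p _ Suc] e by simp
  then show ?case by (simp add: power_mult[symmetric] mult.commute)
qed

lemma fermat_pt:
  fixes a :: int assumes p: "prime (p::nat)" and t: "t \<ge> 1"
  shows "int p ^ t dvd a ^ (p ^ t) - a ^ (p ^ (t - 1))"
proof -
  have "int p ^ (1 + (t - 1)) dvd (a ^ p) ^ (p ^ (t-1)) - a ^ (p ^ (t - 1))"
    using pow_pt_lift[OF p _ , of 1 "a ^ p" a "t - 1"] fermat_int[OF p, of a] by simp
  moreover have "(a ^ p) ^ (p ^ (t-1)) = a ^ (p ^ t)" using t
    by (metis Suc_diff_1 less_le_trans power_Suc power_mult zero_less_one)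
  ultimately show ?thesis using t by simp
qed

definition phi :: "nat \<Rightarrow> nat \<Rightarrow> nat \<Rightarrow> elt \<Rightarrow> int" where
  "phi p k j x = (\<Sum>s\<in>{j..k}. x s * int p ^ (k - s))"

lemma phi_top: "phi p k k x = x k"
  by (simp add: phi_def)

lemma phi_step: "j < k \<Longrightarrow> phi p k j x = x j * int p ^ (k - j) + phi p k (Suc j) x"
  unfolding phi_def by (simp add: sum.atLeast_Suc_atMost)

lemma carrier_eq:
  assumes "p > 0" "x \<in> carrierR k" "y \<in> carrierR k"
    and "\<forall>j\<le>k. phi p k j x = phi p k j y"
  shows "x = y"
proof
  fix j
  show "x j = y j"
  proof (cases "j \<le> k")
    case False then show ?thesis using assms(2,3) by (simp add: carrierR_def)
  next
    case True
    show ?thesis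
    proof (cases "j = k")
      case True then show ?thesis using assms(4) by (metis order_refl phi_top)
    next
      case False
      with True have jk: "j < k" by simp
      have e1: "phi p k j x = phi p k j y" using assms(4) True by blast
      have e2: "phi p k (Suc j) x = phi p k (Suc j) y" using assms(4) jk by simp
      have "x j * int p ^ (k - j) = y j * int p ^ (k - j)"
        using phi_step[OF jk, of p x] phi_step[OF jk, of p y] e1 e2 by linarith
      then show ?thesis using assms(1) by auto
    qed
  qed
qed

lemma res_carrier: "resR p l k x \<in> carrierR k"
  by (simp add: carrierR_def resR_def)

lemma jnd_carrier: "k \<le> l \<Longrightarrow> jndR p k l x \<in> carrierR l"
  by (simp add: carrierR_def jndR_def)

lemma mult_carrier: "multR p k x y \<in> carrierR k"
  by (simp add: carrierR_def multR_def)

lemma multR_comm: "multR p k x y = multR p k y x"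
proof
  fix j
  define g where "g i l = (if min i l = j then x i * y l * int p ^ (k - max i l) else 0)" for i l
  have "(\<Sum>i\<le>k. \<Sum>l\<le>k. g i l) = (\<Sum>l\<le>k. \<Sum>i\<le>k. g i l)" by (rule sum.swap)
  moreover have "g i l = (if min l i = j then y l * x i * int p ^ (k - max l i) else 0)" for i l
    by (simp add: g_def min.commute max.commute mult.commute)
  ultimately show "multR p k x y j = multR p k y x j"
    unfolding multR_def g_def by simp
qed

lemma sum_split_top: "(j::nat) \<le> k \<Longrightarrow> (\<Sum>s\<in>{j..k}. f s) = (\<Sum>s\<in>{j..<k}. f s) + (f k :: int)"
  by (metis atLeastLessThanSuc_atLeastAtMost sum.atLeastLessThan_Suc add.commute)

lemma sum_split_mid: "(j::nat) \<le> k \<Longrightarrow> k \<le> l \<Longrightarrow>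
   (\<Sum>s\<in>{j..l}. f s) = (\<Sum>s\<in>{j..<k}. f s) + (\<Sum>s\<in>{k..l}. (f s :: int))"
proof -
  assume a: "j \<le> k" "k \<le> l"
  have "{j..l} = {j..<k} \<union> {k..l}" using a by auto
  moreover have "{j..<k} \<inter> {k..l} = {}" by auto
  ultimately show ?thesis by (simp add: sum.union_disjoint)
qed

lemma phi_res:
  assumes "k \<le> l" "j \<le> k"
  shows "phi p k j (resR p l k x) = phi p l j x"
proof -
  let ?r = "resR p l k x"
  have "phi p k j ?r = (\<Sum>s\<in>{j..<k}. ?r s * int p ^ (k - s)) + ?r k * int p ^ (k - k)"
    unfolding phi_def using assms(2) by (rule sum_split_top)
  also have "(\<Sum>s\<in>{j..<k}. ?r s * int p ^ (k - s)) = (\<Sum>s\<in>{j..<k}. x s * int p ^ (l - s))"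
  proof (intro sum.cong refl)
    fix s assume "s \<in> {j..<k}"
    then have "s < k" by simp
    then have "?r s * int p ^ (k - s) = x s * (int p ^ (l - k) * int p ^ (k - s))"
      by (simp add: resR_def)
    also have "int p ^ (l - k) * int p ^ (k - s) = int p ^ (l - s)"
      using \<open>s < k\<close> assms by (simp add: power_add[symmetric])
    finally show "?r s * int p ^ (k - s) = x s * int p ^ (l - s)" .
  qed
  also have "?r k * int p ^ (k - k) = (\<Sum>i\<in>{k..l}. x i * int p ^ (l - i))"
    by (simp add: resR_def)
  also have "(\<Sum>s\<in>{j..<k}. x s * int p ^ (l - s)) + (\<Sum>i\<in>{k..l}. x i * int p ^ (l - i))
     = phi p l j x"
    unfolding phi_def using assms(2,1) by (rule sum_split_mid[symmetric])
  finally show ?thesis .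
qed

lemma phi_jnd_aux:
  assumes p: "prime p" and kl: "k \<le> l" and x: "x \<in> carrierR k"
  shows "\<forall>j. l - j = d \<longrightarrow> j \<le> l \<longrightarrow>
    phi p l j (jndR p k l x) = phi p k (min j k) x ^ (p ^ (l - max j k))"
proof (induction d)
  case 0
  show ?case
  proof (intro allI impI)
    fix j assume "l - j = 0" "j \<le> l"
    then have j: "j = l" by simp
    show "phi p l j (jndR p k l x) = phi p k (min j k) x ^ (p ^ (l - max j k))"
      using j kl by (simp add: phi_top jndR_def min_absorb2 max_absorb1)
  qed
next
  case (Suc d)
  show ?case
  proof (intro allI impI)
    fix j assume d: "l - j = Suc d" "j \<le> l"
    let ?y = "jndR p k l x"
    have jl: "j < l" using d by simp
    have IH: "phi p l (Suc j) ?y = phi p k (min (Suc j) k) x ^ (p ^ (l - max (Suc j) k))"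
      using Suc.IH d jl by simp
    have st: "phi p l j ?y = ?y j * int p ^ (l - j) + phi p l (Suc j) ?y"
      using jl by (rule phi_step)
    show "phi p l j ?y = phi p k (min j k) x ^ (p ^ (l - max j k))"
    proof (cases "k \<le> j")
      case True
      have yj: "?y j = (x k ^ (p ^ (l - j)) - x k ^ (p ^ (l - j - 1))) div int p ^ (l - j)"
        using True jl by (simp add: jndR_def)
      have dv: "int p ^ (l - j) dvd x k ^ (p ^ (l - j)) - x k ^ (p ^ (l - j - 1))"
        using fermat_pt[OF p, of "l - j"] jl by simp
      have "?y j * int p ^ (l - j) = x k ^ (p ^ (l - j)) - x k ^ (p ^ (l - j - 1))"
        using yj dv by simp
      moreover have "phi p l (Suc j) ?y = x k ^ (p ^ (l - j - 1))"
        using IH True by (simp add: phi_top min_absorb2 max_absorb1)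
      ultimately show ?thesis using st True by (simp add: phi_top min_absorb2 max_absorb1)
    next
      case False
      then have jk: "j < k" by simp
      let ?A = "\<lambda>i. (\<Sum>s\<in>{i..k}. x s * int p ^ (k - s))"
      have yj: "?y j = (?A j ^ (p ^ (l - k)) - ?A (j+1) ^ (p ^ (l - k))) div int p ^ (l - j)"
        using jk jl by (simp add: jndR_def)
      have Aj: "?A j = phi p k j x" "?A (j+1) = phi p k (Suc j) x" by (simp_all add: phi_def)
      have "?A j - ?A (j+1) = x j * int p ^ (k - j)"
        using Aj phi_step[OF jk, of p x] by simp
      then have h: "int p ^ (k - j) dvd ?A j - ?A (j+1)" by simp
      have e1: "1 \<le> k - j" using jk by simp
      have "int p ^ (k - j + (l - k)) dvd ?A j ^ (p ^ (l - k)) - ?A (j+1) ^ (p ^ (l - k))"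
        by (rule pow_pt_lift[OF p e1 h])
      moreover have "k - j + (l - k) = l - j" using jk kl by simp
      ultimately have dv: "int p ^ (l - j) dvd ?A j ^ (p ^ (l - k)) - ?A (j+1) ^ (p ^ (l - k))"
        by simp
      have "?y j * int p ^ (l - j) = ?A j ^ (p ^ (l - k)) - ?A (j+1) ^ (p ^ (l - k))"
        using yj dv by simp
      moreover have "phi p l (Suc j) ?y = phi p k (Suc j) x ^ (p ^ (l - k))"
        using IH jk by (simp add: min_absorb1 max_absorb2)
      ultimately show ?thesis using st jk Aj by (simp add: min_absorb1 max_absorb2)
    qed
  qed
qed

lemma phi_jnd:
  assumes "prime p" "k \<le> l" "x \<in> carrierR k" "j \<le> l"
  shows "phi p l j (jndR p k l x) = phi p k (min j k) x ^ (p ^ (l - max j k))"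
  using phi_jnd_aux[OF assms(1-3), of "l - j"] assms(4) by blast

lemma res_id: "x \<in> carrierR k \<Longrightarrow> resR p k k x = x"
  by (auto simp: resR_def carrierR_def fun_eq_iff)

lemma jnd_id:
  assumes p: "prime p" and x: "x \<in> carrierR k"
  shows "jndR p k k x = x"
proof (rule carrier_eq[of p])
  show "p > 0" using p prime_gt_0_nat by blast
  show "jndR p k k x \<in> carrierR k" by (rule jnd_carrier) simp
  show "x \<in> carrierR k" by fact
  show "\<forall>j\<le>k. phi p k j (jndR p k k x) = phi p k j x"
    using phi_jnd[OF p order_refl x] by simp
qed

lemma res_comp:
  assumes p: "prime p" and x: "x \<in> carrierR l" and jk: "j \<le> k" and kl: "k \<le> l"
  shows "resR p k j (resR p l k x) = resR p l j x"
proof (rule carrier_eq[of p])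
  show "p > 0" using p prime_gt_0_nat by blast
  show "\<forall>i\<le>j. phi p j i (resR p k j (resR p l k x)) = phi p j i (resR p l j x)"
    using phi_res jk kl by (metis le_trans order_refl)
qed (simp_all add: res_carrier)

lemma exp_arith:
  assumes "(i::nat) \<le> m" "m \<le> l" "j \<le> l"
  shows "(m - max (min j m) i) + (l - max j m) = l - max j i"
  using assms by (cases "j \<le> i"; cases "j \<le> m") (auto simp: max_def min_def)

lemma jnd_comp:
  assumes p: "prime p" and x: "x \<in> carrierR i" and im: "i \<le> m" and ml: "m \<le> l"
  shows "jndR p m l (jndR p i m x) = jndR p i l x"
proof (rule carrier_eq[of p])
  show "p > 0" using p prime_gt_0_nat by blast
  show "jndR p m l (jndR p i m x) \<in> carrierR l" using ml by (rule jnd_carrier)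
  show "jndR p i l x \<in> carrierR l" using im ml by (intro jnd_carrier) simp
  show "\<forall>j\<le>l. phi p l j (jndR p m l (jndR p i m x)) = phi p l j (jndR p i l x)"
  proof (intro allI impI)
    fix j assume jl: "j \<le> l"
    have c: "jndR p i m x \<in> carrierR m" using im by (rule jnd_carrier)
    have "phi p l j (jndR p m l (jndR p i m x))
        = phi p m (min j m) (jndR p i m x) ^ (p ^ (l - max j m))"
      by (rule phi_jnd[OF p ml c jl])
    also have "phi p m (min j m) (jndR p i m x)
        = phi p i (min (min j m) i) x ^ (p ^ (m - max (min j m) i))"
      by (rule phi_jnd[OF p im x]) simp
    also have "(phi p i (min (min j m) i) x ^ (p ^ (m - max (min j m) i))) ^ (p ^ (l - max j m))
        = phi p i (min j i) x ^ (p ^ ((m - max (min j m) i) + (l - max j m)))"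
    proof -
      have mm: "min (min j m) i = min j i" using im by (auto simp: min_def)
      show ?thesis unfolding mm power_add power_mult ..
    qed
    also have "\<dots> = phi p i (min j i) x ^ (p ^ (l - max j i))"
      using exp_arith[OF im ml jl] by simp
    also have "\<dots> = phi p l j (jndR p i l x)"
      using phi_jnd[OF p _ x jl] im ml by simp
    finally show "phi p l j (jndR p m l (jndR p i m x)) = phi p l j (jndR p i l x)" .
  qed
qed

lemma ideal_carrier: "is_tambara_ideal p n I \<Longrightarrow> k \<le> n \<Longrightarrow> I k \<subseteq> carrierR k"
  by (simp add: is_tambara_ideal_def is_idealR_def)

lemma ideal_mult: "is_tambara_ideal p n I \<Longrightarrow> k \<le> n \<Longrightarrow> x \<in> I k \<Longrightarrow> y \<in> carrierR k
   \<Longrightarrow> multR p k y x \<in> I k"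
  by (simp add: is_tambara_ideal_def is_idealR_def)

lemma res_step: "is_tambara_ideal p n I \<Longrightarrow> Suc i \<le> n \<Longrightarrow> x \<in> I (Suc i)
   \<Longrightarrow> resR p (Suc i) i x \<in> I i"
proof -
  assume T: "is_tambara_ideal p n I" and a: "Suc i \<le> n" "x \<in> I (Suc i)"
  from T have h: "\<forall>k. 1 \<le> k \<and> k \<le> n \<longrightarrow> resR p k (k-1) ` I k \<subseteq> I (k-1)"
    unfolding is_tambara_ideal_def by blast
  have "resR p (Suc i) i ` I (Suc i) \<subseteq> I i" using h[rule_format, of "Suc i"] a(1) by simp
  then show ?thesis using a(2) by auto
qed

lemma jnd_step: "is_tambara_ideal p n I \<Longrightarrow> Suc i \<le> n \<Longrightarrow> x \<in> I i
   \<Longrightarrow> jndR p i (Suc i) x \<in> I (Suc i)"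
proof -
  assume T: "is_tambara_ideal p n I" and a: "Suc i \<le> n" "x \<in> I i"
  from T have h: "\<forall>k. 1 \<le> k \<and> k \<le> n \<longrightarrow> jndR p (k-1) k ` I (k-1) \<subseteq> I k"
    unfolding is_tambara_ideal_def by blast
  have "jndR p i (Suc i) ` I i \<subseteq> I (Suc i)" using h[rule_format, of "Suc i"] a(1) by simp
  then show ?thesis using a(2) by auto
qed

lemma res_chain:
  assumes p: "prime p" and T: "is_tambara_ideal p n I" and kn: "k \<le> n" and x: "x \<in> I k"
  shows "i \<le> k \<Longrightarrow> resR p k i x \<in> I i"
proof (induction "k - i" arbitrary: i)
  case 0
  then have "i = k" by simp
  moreover have "x \<in> carrierR k" using ideal_carrier[OF T kn] x by blast
  ultimately show ?case using x res_id by simp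
next
  case (Suc d)
  then have ik: "Suc i \<le> k" by simp
  have "resR p k (Suc i) x \<in> I (Suc i)" using Suc.hyps(1)[of "Suc i"] ik Suc.hyps(2) by simp
  then have "resR p (Suc i) i (resR p k (Suc i) x) \<in> I i"
    using res_step[OF T] ik kn by simp
  moreover have "resR p (Suc i) i (resR p k (Suc i) x) = resR p k i x"
  proof -
    have "x \<in> carrierR k" using ideal_carrier[OF T kn] x by auto
    then show ?thesis using res_comp[OF p _ _ ik] by simp
  qed
  ultimately show ?case by simp
qed

lemma jnd_chain:
  assumes p: "prime p" and T: "is_tambara_ideal p n I" and x: "x \<in> I i"
  shows "i \<le> m \<Longrightarrow> m \<le> n \<Longrightarrow> jndR p i m x \<in> I m"
proof (induction m)
  case 0
  then have "i = 0" by simp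
  moreover have "x \<in> carrierR i" using ideal_carrier[OF T, of i] x 0 by auto
  ultimately show ?case using x jnd_id[OF p] by simp
next
  case (Suc m)
  show ?case
  proof (cases "i = Suc m")
    case True
    moreover have "x \<in> carrierR i" using ideal_carrier[OF T, of i] x Suc.prems True by auto
    ultimately show ?thesis using x jnd_id[OF p] by simp
  next
    case False
    then have im: "i \<le> m" using Suc.prems by simp
    have "i \<le> n" using im Suc.prems by simp
    then have xc: "x \<in> carrierR i" using ideal_carrier[OF T] x by blast
    have "jndR p i m x \<in> I m" using Suc.IH im Suc.prems by simp
    then have "jndR p m (Suc m) (jndR p i m x) \<in> I (Suc m)" using jnd_step[OF T] Suc.prems by blast
    moreover have "jndR p m (Suc m) (jndR p i m x) = jndR p i (Suc m) x"
      by (rule jnd_comp[OF p xc im]) simp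
    ultimately show ?thesis by simp
  qed
qed

lemma least_bad:
  assumes p: "prime p" and T: "is_tambara_ideal p n I" and kn: "k \<le> n"
    and x: "x \<in> carrierR k" and xn: "x \<notin> I k"
  shows "\<exists>i\<le>k. resR p k i x \<in> Lset p I i \<and> resR p k i x \<notin> I i"
proof -
  define P where "P i \<longleftrightarrow> i \<le> k \<and> resR p k i x \<notin> I i" for i
  have "P k" using xn res_id[OF x] by (simp add: P_def)
  then obtain i where Pi: "P i" and mn: "\<forall>i'<i. \<not> P i'" using exists_least_iff[of P] by blast
  have ik: "i \<le> k" and ni: "resR p k i x \<notin> I i" using Pi by (auto simp: P_def)
  have "resR p k i x \<in> Lset p I i"
  proof (cases "i = 0")
    case True then show ?thesis by (simp add: Lset_def res_carrier)
  next
    case False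
    then have "\<not> P (i - 1)" using mn by simp
    then have "resR p k (i - 1) x \<in> I (i - 1)" using ik by (simp add: P_def)
    moreover have "resR p i (i - 1) (resR p k i x) = resR p k (i - 1) x"
      using res_comp[OF p x _ ik, of "i - 1"] by simp
    ultimately show ?thesis using False by (simp add: Lset_def res_carrier)
  qed
  then show ?thesis using ik ni by blast
qed

theorem proposition4:
  fixes p r n :: nat and I :: "nat \<Rightarrow> elt set"
  assumes "prime p" and "n \<le> r"
    and "proper_tambara_ideal p n I"
  shows "prime_tambara_ideal p n I \<longleftrightarrow> (\<forall>k\<le>n. condP p I k)"
proof -
  from assms(3) have T: "is_tambara_ideal p n I" by (simp add: proper_tambara_ideal_def)
  show ?thesis
  proof
    assume P: "prime_tambara_ideal p n I"
    show "\<forall>k\<le>n. condP p I k"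
    proof (intro allI impI)
      fix k assume kn: "k \<le> n"
      show "condP p I k" unfolding condP_def
      proof (intro allI impI ballI)
        fix i a b assume ik: "i \<le> k" and aL: "a \<in> Lset p I k" and bL: "b \<in> Lset p I i - I i"
          and H: "multR p k a (jndR p i k b) \<in> I k"
        have ac: "a \<in> carrierR k" using aL by (auto simp: Lset_def split: if_splits)
        have bc: "b \<in> carrierR i" and bnot: "b \<notin> I i" using bL by (auto simp: Lset_def split: if_splits)
        have "\<forall>i'\<le>k. \<forall>j\<le>i. multR p (max i' j) (jndR p i' (max i' j) (resR p k i' a))
               (jndR p j (max i' j) (resR p i j b)) \<in> I (max i' j)"
        proof (intro allI impI)
          fix i' j assume i'k: "i' \<le> k" and ji: "j \<le> i"
          let ?M = "max i' j"
          have Mk: "?M \<le> k" using i'k ji ik by simp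
          have Mn: "?M \<le> n" using Mk kn by simp
          show "multR p ?M (jndR p i' ?M (resR p k i' a)) (jndR p j ?M (resR p i j b)) \<in> I ?M"
          proof (cases "i' < k")
            case True
            then have k1: "k \<ge> 1" by simp
            have r1: "resR p k (k-1) a \<in> I (k-1)" using aL k1 by (simp add: Lset_def)
            have "resR p (k-1) i' (resR p k (k-1) a) \<in> I i'"
              using res_chain[OF assms(1) T _ r1, of i'] True kn by simp
            moreover have "resR p (k-1) i' (resR p k (k-1) a) = resR p k i' a"
              using res_comp[OF assms(1) ac, of i' "k-1"] True by simp
            ultimately have "resR p k i' a \<in> I i'" by simp
            then have X: "jndR p i' ?M (resR p k i' a) \<in> I ?M"
              using jnd_chain[OF assms(1) T] Mn by simp
            have Y: "jndR p j ?M (resR p i j b) \<in> carrierR ?M" by (rule jnd_carrier) simp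
            have "multR p ?M (jndR p j ?M (resR p i j b)) (jndR p i' ?M (resR p k i' a)) \<in> I ?M"
              by (rule ideal_mult[OF T Mn X Y])
            then show ?thesis by (simp add: multR_comm)
          next
            case False
            then have i'eq: "i' = k" using i'k by simp
            then have M: "?M = k" using ji ik by simp
            have A: "jndR p i' ?M (resR p k i' a) = a"
              using M i'eq res_id[OF ac] jnd_id[OF assms(1) ac] by simp
            show ?thesis
            proof (cases "j = i")
              case True
              have "jndR p j ?M (resR p i j b) = jndR p i k b" using True M res_id[OF bc] by simp
              then show ?thesis using A M H by simp
            next
              case False
              then have ji': "j < i" using ji by simp
              then have i1: "i \<ge> 1" by simp
              have r1: "resR p i (i-1) b \<in> I (i-1)" using bL i1 by (simp add: Lset_def)
              have "resR p (i-1) j (resR p i (i-1) b) \<in> I j"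
                using res_chain[OF assms(1) T _ r1, of j] ji' ik kn by simp
              moreover have "resR p (i-1) j (resR p i (i-1) b) = resR p i j b"
                using res_comp[OF assms(1) bc, of j "i-1"] ji' by simp
              ultimately have "resR p i j b \<in> I j" by simp
              then have Y: "jndR p j k (resR p i j b) \<in> I k"
                using jnd_chain[OF assms(1) T] ji ik kn by simp
              have "multR p k a (jndR p j k (resR p i j b)) \<in> I k"
                by (rule ideal_mult[OF T kn Y ac])
              then show ?thesis using A M by simp
            qed
          qed
        qed
        then have "a \<in> I k \<or> b \<in> I i"
          using P ik kn ac bc unfolding prime_tambara_ideal_def by blast
        then show "a \<in> I k" using bnot by blast
      qed
    qed
  next
    assume C: "\<forall>k\<le>n. condP p I k"
    show "prime_tambara_ideal p n I" unfolding prime_tambara_ideal_def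
    proof (intro conjI allI impI)
      show "proper_tambara_ideal p n I" by (rule assms(3))
      fix k l a b
      assume kl: "l \<le> k \<and> k \<le> n \<and> a \<in> carrierR k \<and> b \<in> carrierR l"
        and H: "\<forall>i\<le>k. \<forall>j\<le>l. multR p (max i j) (jndR p i (max i j) (resR p k i a))
                 (jndR p j (max i j) (resR p l j b)) \<in> I (max i j)"
      show "a \<in> I k \<or> b \<in> I l"
      proof (rule ccontr)
        assume "\<not> (a \<in> I k \<or> b \<in> I l)"
        then have an: "a \<notin> I k" and bn: "b \<notin> I l" by auto
        from kl have lk: "l \<le> k" and kn: "k \<le> n" and ac: "a \<in> carrierR k" and bc: "b \<in> carrierR l"
          by auto
        obtain i where ik: "i \<le> k" and aL: "resR p k i a \<in> Lset p I i" "resR p k i a \<notin> I i"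
          using least_bad[OF assms(1) T kn ac an] by blast
        obtain j where jl: "j \<le> l" and bL: "resR p l j b \<in> Lset p I j" "resR p l j b \<notin> I j"
          using least_bad[OF assms(1) T _ bc bn] lk kn by auto
        let ?a = "resR p k i a" and ?b = "resR p l j b"
        have hij: "multR p (max i j) (jndR p i (max i j) ?a) (jndR p j (max i j) ?b) \<in> I (max i j)"
          using H ik jl by blast
        show False
        proof (cases "j \<le> i")
          case True
          then have M: "max i j = i" by simp
          have "jndR p i i ?a = ?a" by (rule jnd_id[OF assms(1) res_carrier])
          then have "multR p i ?a (jndR p j i ?b) \<in> I i" using hij M by simp
          moreover have "condP p I i" using C ik kn by simp
          ultimately have "?a \<in> I i" using aL bL True unfolding condP_def by blast
          then show False using aL by simp
        next
          case False
          then have M: "max i j = j" and ij: "i \<le> j" by auto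
          have "jndR p j j ?b = ?b" by (rule jnd_id[OF assms(1) res_carrier])
          then have "multR p j ?b (jndR p i j ?a) \<in> I j" using hij M by (simp add: multR_comm)
          moreover have "condP p I j" using C jl lk kn by simp
          ultimately have "?b \<in> I j" using aL bL ij unfolding condP_def by blast
          then show False using bL by simp
        qed
      qed
    qed
  qed
qed

end
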